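(* Let $q\ge0$. For every $X\in\mathcal{X}_{k,q+1}$, \[ \|X(T)\|_H^2+\sum_{i=0}^{N-1}\int_{I_i}\big\|A^{\frac12}\Pi_i^{(q)}X(s)-A^{-\frac12}\dot X(s)\big\|_H^2\,\mathrm{d}s=|X|_{\mathcal{X}_{k,q+1}}^2 , \] where \[ |X|_{\mathcal{X}_{k,q+1}}^2=\|X(0)\|_H^2+\sum_{i=0}^{N-1}\int_{I_i}\Big(\|A^{\frac12}\Pi_i^{(q)}X\|_H^2+\|A^{-\frac12}\dot X\|_H^2\Big)\,\mathrm{d}s . \]
   Context: Let $V\hookrightarrow H\hookrightarrow V^*$ be a Gelfand triple of real separable Hilbert spaces, with $V$ densely embedded in $H$. Let $A:V\to V^*$ be the operator associated with a symmetric, bounded, coercive bilinear form on $V$, with fractional powers defined as usual. For $\gamma\in\mathbb{R}$, $\dot H^\gamma=D(A^{\gamma/2})$ with norm $\|A^{\gamma/2}\cdot\|_H$, so $\dot H^1=V$ and $\dot H^{-1}=V^*$ with equivalent norms. Let $0=t_0<t_1<\dots<t_N=T$, $I_i=[t_i,t_{i+1}]$. Let $\mathcal{X}_{k,q+1}$ be the set of $X\in L^2((0,T);V)\cap H^1((0,T);V^* )$ (hence continuous into $H$) whose restriction to each $I_i$ is a polynomial in $t$ of degree at most $q+1$ with coefficients in $\dot H^1$. On $I_i$, $\Pi_i^{(q)}$ denotes the $L^2(I_i)$-orthogonal projection onto polynomials in $t$ of degree at most $q$. *)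

theory Defs
  imports "HOL-Analysis.Analysis"
begin

text \<open>The operator A is encoded through B = A^(-1/2) restricted to H: a bounded,
  self-adjoint, positive, injective operator on H with dense range.
  Then V = Hdot^1 = range B, A^(1/2) = inverse of B on range B,
  and A^(-1/2) acts on Hdot^1 as B.\<close>

definition frac_scale :: "('h::{real_inner,complete_space} \<Rightarrow> 'h) \<Rightarrow> bool" where
  "frac_scale B \<longleftrightarrow> bounded_linear B \<and> (\<forall>x y. B x \<bullet> y = x \<bullet> B y)
     \<and> (\<forall>x. 0 \<le> B x \<bullet> x) \<and> inj B \<and> closure (range B) = UNIV"

definition Hdot1 :: "('h::real_inner \<Rightarrow> 'h) \<Rightarrow> 'h set" where
  "Hdot1 B = range B"

definition A_half :: "('h::real_inner \<Rightarrow> 'h) \<Rightarrow> 'h \<Rightarrow> 'h" where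
  "A_half B = inv B"

definition A_mhalf :: "('h::real_inner \<Rightarrow> 'h) \<Rightarrow> 'h \<Rightarrow> 'h" where
  "A_mhalf B = B"

definition polys :: "nat \<Rightarrow> (real \<Rightarrow> 'h::real_vector) set" where
  "polys q = {P. \<exists>c. P = (\<lambda>s. \<Sum>j\<le>q. s ^ j *\<^sub>R c j)}"

definition L2proj :: "real \<Rightarrow> real \<Rightarrow> nat \<Rightarrow> (real \<Rightarrow> 'h::real_inner) \<Rightarrow> real \<Rightarrow> 'h" where
  "L2proj a b q f = (THE P. P \<in> polys q \<and>
      (\<forall>Q\<in>polys q. integral {a..b} (\<lambda>s. (f s - P s) \<bullet> Q s) = 0))"

definition time_partition :: "(nat \<Rightarrow> real) \<Rightarrow> nat \<Rightarrow> real \<Rightarrow> bool" where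
  "time_partition t N T \<longleftrightarrow> t 0 = 0 \<and> t N = T \<and> (\<forall>i<N. t i < t (Suc i))"

text \<open>The space X_{k,q+1}: on each closed I_i, X is a polynomial of degree
  at most q+1 with coefficients in Hdot^1.  Since X is a single function and
  the closed intervals share their endpoints, X is continuous into H
  (equivalently, X is in L2(V) \<inter> H1(V*)).\<close>
definition Xspace :: "('h::real_inner \<Rightarrow> 'h) \<Rightarrow> (nat \<Rightarrow> real) \<Rightarrow> nat \<Rightarrow> nat \<Rightarrow> (real \<Rightarrow> 'h) set" where
  "Xspace B t N q = {X. \<exists>c. \<forall>i<N. (\<forall>j. c i j \<in> Hdot1 B) \<and>
      (\<forall>s\<in>{t i..t (Suc i)}. X s = (\<Sum>j\<le>q+1. s ^ j *\<^sub>R c i j))}"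

definition Xdot :: "(nat \<Rightarrow> real) \<Rightarrow> nat \<Rightarrow> (real \<Rightarrow> 'h::real_normed_vector) \<Rightarrow> real \<Rightarrow> 'h" where
  "Xdot t i X s = vector_derivative X (at s within {t i..t (Suc i)})"

definition Pi_q :: "(nat \<Rightarrow> real) \<Rightarrow> nat \<Rightarrow> nat \<Rightarrow> (real \<Rightarrow> 'h::real_inner) \<Rightarrow> real \<Rightarrow> 'h" where
  "Pi_q t q i X = L2proj (t i) (t (Suc i)) q X"

definition Xseminorm_sq :: "('h::real_inner \<Rightarrow> 'h) \<Rightarrow> (nat \<Rightarrow> real) \<Rightarrow> nat \<Rightarrow> nat \<Rightarrow> (real \<Rightarrow> 'h) \<Rightarrow> real" where
  "Xseminorm_sq B t N q X = (norm (X 0))\<^sup>2 + (\<Sum>i<N. integral {t i..t (Suc i)}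
      (\<lambda>s. (norm (A_half B (Pi_q t q i X s)))\<^sup>2 + (norm (A_mhalf B (Xdot t i X s)))\<^sup>2))"

end

theory Submission
  imports Defs
begin

definition pf :: "nat \<Rightarrow> (nat \<Rightarrow> real) \<Rightarrow> real \<Rightarrow> real" where
  "pf q c s = (\<Sum>j\<le>q. c j * s ^ j)"

lemma cont_pf[continuous_intros]: "continuous_on S (pf q c)"
  unfolding pf_def by (intro continuous_intros)

lemma poly_zero:
  fixes a b :: real
  assumes "a < b" "\<forall>s\<in>{a..b}. (\<Sum>j\<le>n. c j * s ^ j) = 0" "j \<le> n"
  shows "c j = 0"
proof -
  have "{a..b} \<subseteq> {x. (\<Sum>i\<le>n. c i * x ^ i) = 0}" using assms by auto
  moreover have "infinite {a..b}" using assms(1) by (simp add: infinite_Icc)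
  ultimately have "infinite {x. (\<Sum>i\<le>n. c i * x ^ i) = 0}" using finite_subset by blast
  then show ?thesis using polyfun_finite_roots[of c n] assms(3) by auto
qed

lemma int_pf: "(\<lambda>s. f s * pf q c s) integrable_on {a..b}" if "continuous_on {a..b} f" for f :: "real \<Rightarrow> real"
  by (intro integrable_continuous_interval continuous_intros that)

lemma integral_sum_mult:
  fixes a b :: real and f :: "real \<Rightarrow> real" and g :: "nat \<Rightarrow> real \<Rightarrow> real"
  assumes "continuous_on {a..b} f" "\<And>k. k \<in> K \<Longrightarrow> continuous_on {a..b} (g k)" "finite K"
  shows "integral {a..b} (\<lambda>s. f s * (\<Sum>k\<in>K. \<beta> k * g k s)) = (\<Sum>k\<in>K. \<beta> k * integral {a..b} (\<lambda>s. f s * g k s))"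
proof -
  have "integral {a..b} (\<lambda>s. f s * (\<Sum>k\<in>K. \<beta> k * g k s)) = integral {a..b} (\<lambda>s. \<Sum>k\<in>K. \<beta> k * (f s * g k s))"
    by (rule arg_cong[where f="integral _"]) (auto simp: sum_distrib_left intro!: sum.cong)
  also have "\<dots> = (\<Sum>k\<in>K. integral {a..b} (\<lambda>s. \<beta> k * (f s * g k s)))"
    by (rule integral_sum[OF assms(3)]) (auto intro!: integrable_continuous_interval continuous_intros assms)
  also have "\<dots> = (\<Sum>k\<in>K. \<beta> k * integral {a..b} (\<lambda>s. f s * g k s))"
    by simp
  finally show ?thesis .
qed

lemma pf_lin: "pf q (\<lambda>j. (if j = n then 1 else 0) - (\<Sum>k\<in>K. \<beta> k * e k j)) s
   = (if n \<le> q then s ^ n else 0) - (\<Sum>k\<in>K. \<beta> k * pf q (e k) s)" if "finite K"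
proof -
  have "pf q (\<lambda>j. (if j = n then 1 else 0) - (\<Sum>k\<in>K. \<beta> k * e k j)) s
     = (\<Sum>j\<le>q. (if j = n then 1 else 0) * s ^ j) - (\<Sum>j\<le>q. \<Sum>k\<in>K. \<beta> k * e k j * s ^ j)"
    unfolding pf_def by (simp add: left_diff_distrib sum_subtractf sum_distrib_right)
  also have "(\<Sum>j\<le>q. (if j = n then 1 else 0) * s ^ j) = (\<Sum>j\<le>q. (if j = n then s ^ n else 0))"
    by (intro sum.cong) auto
  also have "\<dots> = (if n \<le> q then s ^ n else 0)" by simp
  also have "(\<Sum>j\<le>q. \<Sum>k\<in>K. \<beta> k * e k j * s ^ j) = (\<Sum>k\<in>K. \<beta> k * pf q (e k) s)"
    unfolding pf_def by (subst sum.swap) (simp add: sum_distrib_left mult.assoc)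
  finally show ?thesis .
qed

lemma GS:
  fixes a b :: real
  assumes ab: "a < b"
  shows "m \<le> q \<Longrightarrow> \<exists>e::nat\<Rightarrow>nat\<Rightarrow>real. (\<forall>k\<le>m. \<forall>j>k. e k j = 0) \<and>
     (\<forall>i\<le>m. \<forall>k\<le>m. integral {a..b} (\<lambda>s. pf q (e i) s * pf q (e k) s) = (if i = k then 1 else 0)) \<and>
     (\<forall>j\<le>m. \<exists>\<alpha>. \<forall>s. s ^ j = (\<Sum>k\<le>m. \<alpha> k * pf q (e k) s))"
proof (induction m)
  case 0
  define e :: "nat\<Rightarrow>nat\<Rightarrow>real" where "e = (\<lambda>k j. if j = 0 then 1 / sqrt (b - a) else 0)"
  have E: "pf q (e 0) s = 1 / sqrt (b - a)" for s
  proof -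
    have "(\<Sum>j\<le>q. e 0 j * s ^ j) = (\<Sum>j\<le>q. if j = 0 then 1 / sqrt (b - a) else 0)"
      unfolding e_def by (intro sum.cong) auto
    then show ?thesis unfolding pf_def by simp
  qed
  have "(\<forall>k\<le>0. \<forall>j>k. e k j = 0)" by (simp add: e_def)
  moreover have "integral {a..b} (\<lambda>s. pf q (e 0) s * pf q (e 0) s) = 1"
  proof -
    have "(1 / sqrt (b - a)) * (1 / sqrt (b - a)) = 1 / (b - a)"
      using ab real_sqrt_mult_self[of "b - a"] by (simp add: divide_simps)
    then show ?thesis using ab unfolding E by simp
  qed
  moreover have "\<forall>j\<le>0. \<exists>\<alpha>. \<forall>s. s ^ j = (\<Sum>k\<le>0. \<alpha> k * pf q (e k) s)"
  proof -
    have "sqrt (b - a) \<noteq> 0" using ab by simp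
    then have "sqrt (b - a) * (1 / sqrt (b - a)) = 1" by simp
    then have "\<forall>s. s ^ 0 = (\<Sum>k\<le>0. (\<lambda>_. sqrt (b - a)) k * pf q (e k) s)" by (simp add: E)
    then show ?thesis by auto
  qed
  ultimately show ?case by (intro exI[of _ e]) auto
next
  case (Suc m)
  then obtain e where deg: "\<forall>k\<le>m. \<forall>j>k. e k j = 0"
    and on: "\<forall>i\<le>m. \<forall>k\<le>m. integral {a..b} (\<lambda>s. pf q (e i) s * pf q (e k) s) = (if i = k then 1 else 0)"
    and sp: "\<forall>j\<le>m. \<exists>\<alpha>. \<forall>s. s ^ j = (\<Sum>k\<le>m. \<alpha> k * pf q (e k) s)"
    by auto
  define \<beta> where "\<beta> k = integral {a..b} (\<lambda>s. s ^ Suc m * pf q (e k) s)" for k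
  define gc where "gc j = (if j = Suc m then 1 else 0) - (\<Sum>k\<le>m. \<beta> k * e k j)" for j
  define g where "g = pf q gc"
  have g_eq: "g s = s ^ Suc m - (\<Sum>k\<le>m. \<beta> k * pf q (e k) s)" for s
    unfolding g_def gc_def using pf_lin[where K="{..m}" and n="Suc m" and \<beta>=\<beta> and e=e and q=q and s=s] Suc.prems by simp
  have contE: "continuous_on {a..b} (pf q (e k))" for k by (intro continuous_intros)
  have contg: "continuous_on {a..b} g" unfolding g_def by (intro continuous_intros)
  have orth: "integral {a..b} (\<lambda>s. g s * pf q (e i) s) = 0" if "i \<le> m" for i
  proof -
    have "integral {a..b} (\<lambda>s. g s * pf q (e i) s) =
       integral {a..b} (\<lambda>s. s ^ Suc m * pf q (e i) s) - integral {a..b} (\<lambda>s. pf q (e i) s * (\<Sum>k\<le>m. \<beta> k * pf q (e k) s))"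
      unfolding g_eq left_diff_distrib
      by (subst integral_diff) (auto simp: mult.commute intro!: integrable_continuous_interval continuous_intros)
    also have "integral {a..b} (\<lambda>s. pf q (e i) s * (\<Sum>k\<le>m. \<beta> k * pf q (e k) s))
        = (\<Sum>k\<le>m. \<beta> k * integral {a..b} (\<lambda>s. pf q (e i) s * pf q (e k) s))"
      by (rule integral_sum_mult) (auto intro: continuous_intros)
    also have "\<dots> = (\<Sum>k\<le>m. \<beta> k * (if i = k then 1 else 0))"
      by (intro sum.cong refl) (use on that in auto)
    also have "\<dots> = (\<Sum>k\<le>m. if k = i then \<beta> i else 0)"
      by (intro sum.cong refl) auto
    also have "\<dots> = \<beta> i" using that by simp
    finally show ?thesis unfolding \<beta>_def by simp
  qed
  define \<nu> where "\<nu> = integral {a..b} (\<lambda>s. g s * g s)"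
  have nu_ge: "\<nu> \<ge> 0" unfolding \<nu>_def
    by (rule integral_nonneg) (auto intro!: integrable_continuous_interval continuous_on_mult[OF contg contg])
  have "(\<Sum>k\<le>m. \<beta> k * e k (Suc m)) = 0"
    by (rule sum.neutral) (use deg in auto)
  then have gcS: "gc (Suc m) = 1" unfolding gc_def by simp
  have nu_ne: "\<nu> \<noteq> 0"
  proof
    assume "\<nu> = 0"
    then have "\<forall>x\<in>cbox a b. g x * g x = 0"
      using integral_cbox_eq_0_iff[of a b "\<lambda>s. g s * g s", OF _ _] ab continuous_on_mult[OF contg contg] unfolding \<nu>_def
      by auto
    then have "\<forall>s\<in>{a..b}. (\<Sum>j\<le>q. gc j * s ^ j) = 0" by (auto simp: g_def pf_def)
    from poly_zero[OF ab this, of "Suc m"] Suc.prems gcS show False by simp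
  qed
  then have nu_pos: "\<nu> > 0" using nu_ge by simp
  define e' where "e' = e(Suc m := (\<lambda>j. gc j / sqrt \<nu>))"
  have E'S: "pf q (e' (Suc m)) s = g s / sqrt \<nu>" for s
    unfolding e'_def g_def pf_def by (simp add: sum_divide_distrib)
  have E'k: "k \<le> m \<Longrightarrow> e' k = e k" for k unfolding e'_def by simp
  have "\<forall>k\<le>Suc m. \<forall>j>k. e' k j = 0"
  proof (intro allI impI)
    fix k j assume "k \<le> Suc m" "j > k"
    then show "e' k j = 0"
    proof (cases "k = Suc m")
      case True
      then show ?thesis using \<open>j > k\<close> deg unfolding e'_def gc_def by simp
    qed (use deg \<open>j > k\<close> \<open>k \<le> Suc m\<close> E'k in auto)
  qed
  moreover have "\<forall>i\<le>Suc m. \<forall>k\<le>Suc m. integral {a..b} (\<lambda>s. pf q (e' i) s * pf q (e' k) s) = (if i = k then 1 else 0)"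
  proof (intro allI impI)
    fix i k assume ik: "i \<le> Suc m" "k \<le> Suc m"
    consider "i = Suc m" "k = Suc m" | "i = Suc m" "k \<le> m" | "i \<le> m" "k = Suc m" | "i \<le> m" "k \<le> m"
      using ik by linarith
    then show "integral {a..b} (\<lambda>s. pf q (e' i) s * pf q (e' k) s) = (if i = k then 1 else 0)"
    proof cases
      case 1
      have "integral {a..b} (\<lambda>s. pf q (e' i) s * pf q (e' k) s) = integral {a..b} (\<lambda>s. g s * g s) / \<nu>"
        unfolding 1 E'S using nu_pos by (simp add: divide_simps)
      then show ?thesis using 1 nu_pos \<nu>_def by simp
    next
      case 2
      have "integral {a..b} (\<lambda>s. pf q (e' i) s * pf q (e' k) s) = integral {a..b} (\<lambda>s. g s * pf q (e k) s) / sqrt \<nu>"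
        unfolding 2 E'S E'k[OF 2(2)] by simp
      then show ?thesis using 2 orth by simp
    next
      case 3
      have "integral {a..b} (\<lambda>s. pf q (e' i) s * pf q (e' k) s) = integral {a..b} (\<lambda>s. g s * pf q (e i) s) / sqrt \<nu>"
        unfolding 3 E'S E'k[OF 3(1)] by (simp add: mult.commute)
      then show ?thesis using 3 orth by simp
    next
      case 4
      then show ?thesis using on E'k by simp
    qed
  qed
  moreover have "\<forall>j\<le>Suc m. \<exists>\<alpha>. \<forall>s. s ^ j = (\<Sum>k\<le>Suc m. \<alpha> k * pf q (e' k) s)"
  proof (intro allI impI)
    fix j assume j: "j \<le> Suc m"
    show "\<exists>\<alpha>. \<forall>s. s ^ j = (\<Sum>k\<le>Suc m. \<alpha> k * pf q (e' k) s)"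
    proof (cases "j = Suc m")
      case True
      have "s ^ j = (\<Sum>k\<le>Suc m. (\<beta>(Suc m := sqrt \<nu>)) k * pf q (e' k) s)" for s
        using True g_eq[of s] nu_pos E'k by (simp add: E'S)
      then show ?thesis by blast
    next
      case False
      then have "j \<le> m" using j by simp
      then obtain \<alpha> where \<alpha>: "\<forall>s. s ^ j = (\<Sum>k\<le>m. \<alpha> k * pf q (e k) s)" using sp by blast
      have "s ^ j = (\<Sum>k\<le>Suc m. (\<alpha>(Suc m := 0)) k * pf q (e' k) s)" for s
        using \<alpha> E'k by simp
      then show ?thesis by blast
    qed
  qed
  ultimately show ?case by (intro exI[of _ e']) auto
qed


lemma polys_cont: "P \<in> polys q \<Longrightarrow> continuous_on S P" for P :: "real \<Rightarrow> 'h::real_normed_vector"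
  unfolding polys_def by (auto intro!: continuous_intros)

lemma integral_inner_const:
  fixes h :: "real \<Rightarrow> 'h::real_inner"
  assumes "h integrable_on S"
  shows "integral S (\<lambda>x. h x \<bullet> c) = integral S h \<bullet> c"
  using integral_linear[OF assms bounded_linear_inner_left[of c]] by (simp add: o_def)

lemma proj_exists:
  fixes x :: "nat \<Rightarrow> 'h::real_inner" and a b :: real and n q :: nat
  assumes ab: "a < b"
  defines "f \<equiv> (\<lambda>s. \<Sum>j\<le>n. s ^ j *\<^sub>R x j)"
  shows "\<exists>e::nat\<Rightarrow>nat\<Rightarrow>real. (\<lambda>s. \<Sum>k\<le>q. pf q (e k) s *\<^sub>R (\<Sum>j\<le>n. integral {a..b} (\<lambda>r. pf q (e k) r * r ^ j) *\<^sub>R x j)) \<in> polys q \<and>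
     (\<forall>Q\<in>polys q. integral {a..b} (\<lambda>s. (f s - (\<Sum>k\<le>q. pf q (e k) s *\<^sub>R (\<Sum>j\<le>n. integral {a..b} (\<lambda>r. pf q (e k) r * r ^ j) *\<^sub>R x j))) \<bullet> Q s) = 0)"
proof -
  obtain e where on: "\<forall>i\<le>q. \<forall>k\<le>q. integral {a..b} (\<lambda>s. pf q (e i) s * pf q (e k) s) = (if i = k then 1 else 0)"
    and sp: "\<forall>j\<le>q. \<exists>\<alpha>. \<forall>s. s ^ j = (\<Sum>k\<le>q. \<alpha> k * pf q (e k) s)"
    using GS[OF ab, of q q] by auto
  define m where "m k = (\<Sum>j\<le>n. integral {a..b} (\<lambda>r. pf q (e k) r * r ^ j) *\<^sub>R x j)" for k
  define P where "P s = (\<Sum>k\<le>q. pf q (e k) s *\<^sub>R m k)" for s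
  have contP: "continuous_on {a..b} P" unfolding P_def by (intro continuous_intros)
  have fc: "continuous_on {a..b} f" unfolding f_def by (intro continuous_intros)
  have Pin: "P \<in> polys q"
  proof -
    have "P s = (\<Sum>j\<le>q. s ^ j *\<^sub>R (\<Sum>k\<le>q. e k j *\<^sub>R m k))" for s
      unfolding P_def pf_def scaleR_sum_left scaleR_sum_right scaleR_scaleR
      by (subst sum.swap) (simp add: mult.commute)
    then have "P = (\<lambda>s. \<Sum>j\<le>q. s ^ j *\<^sub>R (\<Sum>k\<le>q. e k j *\<^sub>R m k))" by (rule ext)
    then show ?thesis unfolding polys_def mem_Collect_eq
      by (intro exI[where x="\<lambda>j. \<Sum>k\<le>q. e k j *\<^sub>R m k"])
  qed
  have K: "integral {a..b} (\<lambda>s. pf q (e k) s * ((f s - P s) \<bullet> c)) = 0" if "k \<le> q" for k c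
  proof -
    have c1: "continuous_on {a..b} (\<lambda>s. pf q (e k) s * (f s \<bullet> c))" by (intro continuous_intros fc)
    have c2: "continuous_on {a..b} (\<lambda>s. pf q (e k) s * (P s \<bullet> c))" by (intro continuous_intros contP)
    have "integral {a..b} (\<lambda>s. pf q (e k) s * ((f s - P s) \<bullet> c)) =
        integral {a..b} (\<lambda>s. pf q (e k) s * (f s \<bullet> c)) - integral {a..b} (\<lambda>s. pf q (e k) s * (P s \<bullet> c))"
      using integral_diff[OF integrable_continuous_interval[OF c1] integrable_continuous_interval[OF c2]]
      by (simp add: inner_diff_left right_diff_distrib)
    also have "integral {a..b} (\<lambda>s. pf q (e k) s * (f s \<bullet> c)) =
        integral {a..b} (\<lambda>s. pf q (e k) s * (\<Sum>j\<le>n. (x j \<bullet> c) * (\<lambda>j r. r ^ j) j s))"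
      unfolding f_def by (simp add: inner_sum_left mult.commute)
    also have "\<dots> = (\<Sum>j\<le>n. (x j \<bullet> c) * integral {a..b} (\<lambda>s. pf q (e k) s * s ^ j))"
      by (rule integral_sum_mult) (auto intro: continuous_intros)
    also have "\<dots> = m k \<bullet> c"
      unfolding m_def by (simp add: inner_sum_left mult.commute)
    also have "integral {a..b} (\<lambda>s. pf q (e k) s * (P s \<bullet> c)) =
        integral {a..b} (\<lambda>s. pf q (e k) s * (\<Sum>l\<le>q. (m l \<bullet> c) * pf q (e l) s))"
      unfolding P_def by (simp add: inner_sum_left mult.commute)
    also have "\<dots> = (\<Sum>l\<le>q. (m l \<bullet> c) * integral {a..b} (\<lambda>s. pf q (e k) s * pf q (e l) s))"
      by (rule integral_sum_mult) (auto intro: continuous_intros)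
    also have "\<dots> = (\<Sum>l\<le>q. if l = k then m k \<bullet> c else 0)"
      by (intro sum.cong refl) (use on that in auto)
    also have "\<dots> = m k \<bullet> c" using that by simp
    finally show ?thesis by simp
  qed
  have K2: "integral {a..b} (\<lambda>s. (f s - P s) \<bullet> (s ^ j *\<^sub>R c)) = 0" if jq: "j \<le> q" for j c
  proof -
    obtain \<alpha> where \<alpha>: "\<forall>s. s ^ j = (\<Sum>k\<le>q. \<alpha> k * pf q (e k) s)" using sp jq by blast
    have cc: "continuous_on {a..b} (\<lambda>s. (f s - P s) \<bullet> c)" by (intro continuous_intros fc contP)
    have "integral {a..b} (\<lambda>s. (f s - P s) \<bullet> (s ^ j *\<^sub>R c)) =
        integral {a..b} (\<lambda>s. ((f s - P s) \<bullet> c) * (\<Sum>k\<le>q. \<alpha> k * pf q (e k) s))"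
      using \<alpha> by (simp add: mult.commute)
    also have "\<dots> = (\<Sum>k\<le>q. \<alpha> k * integral {a..b} (\<lambda>s. ((f s - P s) \<bullet> c) * pf q (e k) s))"
      by (rule integral_sum_mult[OF cc]) (auto intro: continuous_intros)
    also have "\<dots> = 0" using K by (simp add: mult.commute)
    finally show ?thesis .
  qed
  have "\<forall>Q\<in>polys q. integral {a..b} (\<lambda>s. (f s - P s) \<bullet> Q s) = 0"
  proof
    fix Q :: "real \<Rightarrow> 'h" assume "Q \<in> polys q"
    then obtain c where Q: "Q = (\<lambda>s. \<Sum>j\<le>q. s ^ j *\<^sub>R c j)" unfolding polys_def by blast
    have "integral {a..b} (\<lambda>s. (f s - P s) \<bullet> Q s) = (\<Sum>j\<le>q. integral {a..b} (\<lambda>s. (f s - P s) \<bullet> (s ^ j *\<^sub>R c j)))"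
      unfolding Q inner_sum_right
      by (rule integral_sum) (auto intro!: integrable_continuous_interval continuous_intros fc contP)
    also have "\<dots> = 0" using K2 by simp
    finally show "integral {a..b} (\<lambda>s. (f s - P s) \<bullet> Q s) = 0" .
  qed
  then show ?thesis using Pin unfolding P_def m_def by blast
qed

lemma proj_unique:
  fixes f P1 P2 :: "real \<Rightarrow> 'h::real_inner" and a b :: real
  assumes ab: "a < b" and fc: "continuous_on {a..b} f"
    and P1: "P1 \<in> polys q" and P2: "P2 \<in> polys q"
    and o1: "\<forall>Q\<in>polys q. integral {a..b} (\<lambda>s. (f s - P1 s) \<bullet> Q s) = 0"
    and o2: "\<forall>Q\<in>polys q. integral {a..b} (\<lambda>s. (f s - P2 s) \<bullet> Q s) = 0"
  shows "P1 = P2"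
proof -
  obtain c1 where c1: "P1 = (\<lambda>s. \<Sum>j\<le>q. s ^ j *\<^sub>R c1 j)" using P1 unfolding polys_def by blast
  obtain c2 where c2: "P2 = (\<lambda>s. \<Sum>j\<le>q. s ^ j *\<^sub>R c2 j)" using P2 unfolding polys_def by blast
  define D where "D = (\<lambda>s. P1 s - P2 s)"
  have Deq: "D s = (\<Sum>j\<le>q. s ^ j *\<^sub>R (c1 j - c2 j))" for s
    unfolding D_def c1 c2 by (simp add: sum_subtractf scaleR_diff_right)
  have Din: "D \<in> polys q" unfolding polys_def mem_Collect_eq
    by (intro exI[where x="\<lambda>j. c1 j - c2 j"]) (simp add: Deq fun_eq_iff)
  have cP1: "continuous_on {a..b} P1" using P1 by (rule polys_cont)
  have cP2: "continuous_on {a..b} P2" using P2 by (rule polys_cont)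
  have cD: "continuous_on {a..b} D" unfolding D_def by (intro continuous_intros cP1 cP2)
  have i1: "(\<lambda>s. (f s - P1 s) \<bullet> D s) integrable_on {a..b}"
    by (intro integrable_continuous_interval continuous_intros fc cP1 cD)
  have i2: "(\<lambda>s. (f s - P2 s) \<bullet> D s) integrable_on {a..b}"
    by (intro integrable_continuous_interval continuous_intros fc cP2 cD)
  have "integral {a..b} (\<lambda>s. D s \<bullet> D s) = integral {a..b} (\<lambda>s. (f s - P2 s) \<bullet> D s - (f s - P1 s) \<bullet> D s)"
    by (rule integral_cong) (simp add: D_def inner_diff_left)
  also have "\<dots> = 0" using integral_diff[OF i2 i1] o1 o2 Din by simp
  finally have "integral (cbox a b) (\<lambda>s. D s \<bullet> D s) = 0" by simp
  then have Dz: "\<forall>s\<in>cbox a b. D s \<bullet> D s = 0"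
    using integral_cbox_eq_0_iff[of a b "\<lambda>s. D s \<bullet> D s"] ab continuous_on_inner[OF cD cD] by auto
  have "c1 i = c2 i" if iq: "i \<le> q" for i
  proof -
    have "\<forall>s\<in>{a..b}. (\<Sum>j\<le>q. ((c1 j - c2 j) \<bullet> (c1 i - c2 i)) * s ^ j) = 0"
    proof
      fix s assume "s \<in> {a..b}"
      then have "D s = 0" using Dz by simp
      then have "D s \<bullet> (c1 i - c2 i) = 0" by simp
      then show "(\<Sum>j\<le>q. ((c1 j - c2 j) \<bullet> (c1 i - c2 i)) * s ^ j) = 0"
        unfolding Deq by (simp add: inner_sum_left mult.commute)
    qed
    from poly_zero[OF ab this iq] show ?thesis by simp
  qed
  then show ?thesis unfolding c1 c2 by (intro ext sum.cong) auto
qed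

lemma L2proj_eq:
  fixes f P :: "real \<Rightarrow> 'h::real_inner" and a b :: real
  assumes ab: "a < b" and fc: "continuous_on {a..b} f"
    and P: "P \<in> polys q"
    and o: "\<forall>Q\<in>polys q. integral {a..b} (\<lambda>s. (f s - P s) \<bullet> Q s) = 0"
  shows "L2proj a b q f = P"
  unfolding L2proj_def
  by (rule the_equality) (use assms proj_unique[OF ab fc] in auto)

lemma poly_vderiv:
  fixes c :: "nat \<Rightarrow> 'a::real_normed_vector"
  shows "((\<lambda>s. \<Sum>j\<le>Suc n. s ^ j *\<^sub>R c j) has_vector_derivative
     (\<Sum>j\<le>n. t ^ j *\<^sub>R (real (Suc j) *\<^sub>R c (Suc j)))) (at t within S)"
proof -
  have "((\<lambda>s. \<Sum>j\<le>Suc n. s ^ j *\<^sub>R c j) has_vector_derivative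
     (\<Sum>j\<le>Suc n. (real j * t ^ (j - 1)) *\<^sub>R c j)) (at t within S)"
    by (intro has_vector_derivative_sum)
       (auto intro!: derivative_eq_intros has_vector_derivative_scaleR[where g="\<lambda>_. c _" and g'=0, simplified])
  also have "(\<Sum>j\<le>Suc n. (real j * t ^ (j - 1)) *\<^sub>R c j) = (\<Sum>j\<le>n. t ^ j *\<^sub>R (real (Suc j) *\<^sub>R c (Suc j)))"
    by (subst sum.atMost_Suc_shift) (simp add: mult.commute)
  finally show ?thesis .
qed

lemma norm_diff_sq:
  fixes u v :: "'a::real_inner"
  shows "(norm (u - v))\<^sup>2 = (norm u)\<^sup>2 + (norm v)\<^sup>2 - 2 * (u \<bullet> v)"
  by (simp add: power2_norm_eq_inner inner_diff_left inner_diff_right inner_commute)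

lemma interval_identity:
  fixes B :: "'h::{real_inner,complete_space} \<Rightarrow> 'h" and y :: "nat \<Rightarrow> 'h" and X :: "real \<Rightarrow> 'h"
    and a b :: real
  assumes fs: "frac_scale B" and ab: "a < b"
    and X: "\<forall>s\<in>{a..b}. X s = (\<Sum>j\<le>Suc q. s ^ j *\<^sub>R B (y j))"
  shows "integral {a..b} (\<lambda>s. (norm (A_half B (L2proj a b q X s) - A_mhalf B (vector_derivative X (at s within {a..b}))))\<^sup>2)
    = integral {a..b} (\<lambda>s. (norm (A_half B (L2proj a b q X s)))\<^sup>2 + (norm (A_mhalf B (vector_derivative X (at s within {a..b}))))\<^sup>2)
      - ((norm (X b))\<^sup>2 - (norm (X a))\<^sup>2)"
proof -
  have bl: "bounded_linear B" and sa: "\<And>x y. B x \<bullet> y = x \<bullet> B y" and inj: "inj B"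
    using fs unfolding frac_scale_def by auto
  have linB: "linear B" using bl by (rule bounded_linear.linear)
  define Xp where "Xp s = (\<Sum>j\<le>Suc q. s ^ j *\<^sub>R B (y j))" for s
  have XXp: "s \<in> {a..b} \<Longrightarrow> X s = Xp s" for s using X unfolding Xp_def by simp
  have cXp: "continuous_on {a..b} Xp" unfolding Xp_def by (intro continuous_intros)
  have projX: "L2proj a b q X = L2proj a b q Xp"
  proof -
    have "\<And>P Q. integral {a..b} (\<lambda>s. (X s - P s) \<bullet> Q s) = integral {a..b} (\<lambda>s. (Xp s - P s) \<bullet> Q s)"
      by (rule integral_cong) (simp add: XXp)
    then show ?thesis unfolding L2proj_def by simp
  qed
  obtain e where Pin: "(\<lambda>s. \<Sum>k\<le>q. pf q (e k) s *\<^sub>R (\<Sum>j\<le>Suc q. integral {a..b} (\<lambda>r. pf q (e k) r * r ^ j) *\<^sub>R B (y j))) \<in> polys q"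
    and orth: "\<forall>Q\<in>polys q. integral {a..b} (\<lambda>s. (Xp s - (\<Sum>k\<le>q. pf q (e k) s *\<^sub>R (\<Sum>j\<le>Suc q. integral {a..b} (\<lambda>r. pf q (e k) r * r ^ j) *\<^sub>R B (y j)))) \<bullet> Q s) = 0"
    using proj_exists[OF ab, where n="Suc q" and x="\<lambda>j. B (y j)" and q=q] unfolding Xp_def by blast
  define P where "P s = (\<Sum>k\<le>q. pf q (e k) s *\<^sub>R (\<Sum>j\<le>Suc q. integral {a..b} (\<lambda>r. pf q (e k) r * r ^ j) *\<^sub>R B (y j)))" for s
  define U where "U s = (\<Sum>k\<le>q. pf q (e k) s *\<^sub>R (\<Sum>j\<le>Suc q. integral {a..b} (\<lambda>r. pf q (e k) r * r ^ j) *\<^sub>R y j))" for s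
  have PU: "P s = B (U s)" for s
    unfolding P_def U_def by (simp only: linear_sum[OF linB] linear_scale[OF linB] o_def)
  have Pin': "P \<in> polys q" using Pin unfolding P_def[abs_def] .
  have orth': "\<forall>Q\<in>polys q. integral {a..b} (\<lambda>s. (Xp s - P s) \<bullet> Q s) = 0" using orth unfolding P_def[abs_def] .
  have projP: "L2proj a b q X = P" unfolding projX by (rule L2proj_eq[OF ab cXp Pin' orth'])
  have AU: "A_half B (L2proj a b q X s) = U s" for s
    unfolding projP PU A_half_def by (rule inv_f_f[OF inj])
  define D where "D s = (\<Sum>j\<le>q. s ^ j *\<^sub>R (real (Suc j) *\<^sub>R B (y (Suc j))))" for s
  have Din: "D \<in> polys q" unfolding polys_def mem_Collect_eq
    by (intro exI[where x="\<lambda>j. real (Suc j) *\<^sub>R B (y (Suc j))"]) (simp add: D_def[abs_def])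
  have XD: "vector_derivative X (at s within {a..b}) = D s" if s: "s \<in> {a..b}" for s
  proof -
    have "(Xp has_vector_derivative D s) (at s within {a..b})"
      unfolding Xp_def D_def by (rule poly_vderiv)
    then have "(X has_vector_derivative D s) (at s within {a..b})"
      by (rule has_vector_derivative_weaken[OF _ s subset_refl]) (simp add: XXp)
    then show ?thesis using vector_derivative_within_cbox[OF ab, of s X "D s"] s by simp
  qed
  have cU: "continuous_on {a..b} U" unfolding U_def by (intro continuous_intros)
  have cD: "continuous_on {a..b} D" unfolding D_def by (intro continuous_intros)
  have cBD: "continuous_on {a..b} (\<lambda>s. B (D s))" by (rule bounded_linear.continuous_on[OF bl cD])
  have cP: "continuous_on {a..b} P" unfolding P_def by (intro continuous_intros)
  have pt: "(norm (U s - B (D s)))\<^sup>2 = ((norm (U s))\<^sup>2 + (norm (B (D s)))\<^sup>2) - 2 * (P s \<bullet> D s)" for s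
    unfolding norm_diff_sq PU sa by simp
  have i1: "(\<lambda>s. (norm (U s))\<^sup>2 + (norm (B (D s)))\<^sup>2) integrable_on {a..b}"
    by (intro integrable_continuous_interval continuous_intros cU cBD)
  have i2: "(\<lambda>s. 2 * (P s \<bullet> D s)) integrable_on {a..b}"
    by (intro integrable_continuous_interval continuous_intros cP cD)
  have i3: "(\<lambda>s. Xp s \<bullet> D s) integrable_on {a..b}"
    by (intro integrable_continuous_interval continuous_intros cXp cD)
  have i4: "(\<lambda>s. P s \<bullet> D s) integrable_on {a..b}"
    by (intro integrable_continuous_interval continuous_intros cP cD)
  have "integral {a..b} (\<lambda>s. (Xp s - P s) \<bullet> D s) = 0" using orth' Din by blast
  then have "integral {a..b} (\<lambda>s. Xp s \<bullet> D s - P s \<bullet> D s) = 0" by (simp add: inner_diff_left)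
  then have PX: "integral {a..b} (\<lambda>s. P s \<bullet> D s) = integral {a..b} (\<lambda>s. Xp s \<bullet> D s)"
    using integral_diff[OF i3 i4] by simp
  have ftc: "((\<lambda>s. Xp s \<bullet> D s + D s \<bullet> Xp s) has_integral (Xp b \<bullet> Xp b - Xp a \<bullet> Xp a)) {a..b}"
  proof (rule fundamental_theorem_of_calculus)
    show "a \<le> b" using ab by simp
    fix s assume "s \<in> {a..b}"
    have d: "(Xp has_vector_derivative D s) (at s within {a..b})"
      unfolding Xp_def D_def by (rule poly_vderiv)
    show "((\<lambda>s. Xp s \<bullet> Xp s) has_vector_derivative (Xp s \<bullet> D s + D s \<bullet> Xp s)) (at s within {a..b})"
      by (rule bounded_bilinear.has_vector_derivative[OF bounded_bilinear_inner d d])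
  qed
  moreover have "(\<lambda>s. Xp s \<bullet> D s + D s \<bullet> Xp s) = (\<lambda>s. 2 * (Xp s \<bullet> D s))"
    by (simp add: inner_commute fun_eq_iff)
  ultimately have "integral {a..b} (\<lambda>s. 2 * (Xp s \<bullet> D s)) = Xp b \<bullet> Xp b - Xp a \<bullet> Xp a"
    by (metis integral_unique)
  then have XD2: "integral {a..b} (\<lambda>s. 2 * (P s \<bullet> D s)) = (norm (X b))\<^sup>2 - (norm (X a))\<^sup>2"
    using PX ab by (simp add: XXp power2_norm_eq_inner)
  have "integral {a..b} (\<lambda>s. (norm (A_half B (L2proj a b q X s) - A_mhalf B (vector_derivative X (at s within {a..b}))))\<^sup>2)
      = integral {a..b} (\<lambda>s. ((norm (U s))\<^sup>2 + (norm (B (D s)))\<^sup>2) - 2 * (P s \<bullet> D s))"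
    by (rule integral_cong) (simp add: AU XD A_mhalf_def pt)
  also have "\<dots> = integral {a..b} (\<lambda>s. (norm (U s))\<^sup>2 + (norm (B (D s)))\<^sup>2) - ((norm (X b))\<^sup>2 - (norm (X a))\<^sup>2)"
    using integral_diff[OF i1 i2] XD2 by simp
  also have "integral {a..b} (\<lambda>s. (norm (U s))\<^sup>2 + (norm (B (D s)))\<^sup>2)
     = integral {a..b} (\<lambda>s. (norm (A_half B (L2proj a b q X s)))\<^sup>2 + (norm (A_mhalf B (vector_derivative X (at s within {a..b}))))\<^sup>2)"
    by (rule integral_cong) (simp add: AU XD A_mhalf_def)
  finally show ?thesis .
qed

theorem lemma5p1:
  fixes B :: "'h::{real_inner,complete_space,second_countable_topology} \<Rightarrow> 'h"
    and t :: "nat \<Rightarrow> real" and N :: nat and T :: real and q :: nat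
    and X :: "real \<Rightarrow> 'h"
  assumes "frac_scale B"
    and "time_partition t N T"
    and "X \<in> Xspace B t N q"
  shows "(norm (X T))\<^sup>2 + (\<Sum>i<N. integral {t i..t (Suc i)}
            (\<lambda>s. (norm (A_half B (Pi_q t q i X s) - A_mhalf B (Xdot t i X s)))\<^sup>2))
         = Xseminorm_sq B t N q X"
proof -
  have t0: "t 0 = 0" and tN: "t N = T" and tlt: "\<And>i. i < N \<Longrightarrow> t i < t (Suc i)"
    using assms(2) unfolding time_partition_def by auto
  obtain c where c: "\<And>i. i < N \<Longrightarrow> (\<forall>j. c i j \<in> Hdot1 B) \<and>
      (\<forall>s\<in>{t i..t (Suc i)}. X s = (\<Sum>j\<le>q+1. s ^ j *\<^sub>R c i j))"
    using assms(3) unfolding Xspace_def by blast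
  define R where "R i = integral {t i..t (Suc i)}
      (\<lambda>s. (norm (A_half B (Pi_q t q i X s)))\<^sup>2 + (norm (A_mhalf B (Xdot t i X s)))\<^sup>2)" for i
  have step: "integral {t i..t (Suc i)} (\<lambda>s. (norm (A_half B (Pi_q t q i X s) - A_mhalf B (Xdot t i X s)))\<^sup>2)
      = R i - ((norm (X (t (Suc i))))\<^sup>2 - (norm (X (t i)))\<^sup>2)" if i: "i < N" for i
  proof -
    define y where "y j = inv B (c i j)" for j
    have cy: "c i j = B (y j)" for j
      using c[OF i] unfolding y_def Hdot1_def by (simp add: f_inv_into_f)
    have "\<forall>s\<in>{t i..t (Suc i)}. X s = (\<Sum>j\<le>Suc q. s ^ j *\<^sub>R B (y j))"
      using c[OF i] cy by simp
    from interval_identity[OF assms(1) tlt[OF i] this]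
    show ?thesis unfolding R_def Pi_q_def Xdot_def .
  qed
  have "(\<Sum>i<N. integral {t i..t (Suc i)} (\<lambda>s. (norm (A_half B (Pi_q t q i X s) - A_mhalf B (Xdot t i X s)))\<^sup>2))
     = (\<Sum>i<N. R i - ((norm (X (t (Suc i))))\<^sup>2 - (norm (X (t i)))\<^sup>2))"
    by (rule sum.cong) (simp_all add: step)
  also have "\<dots> = (\<Sum>i<N. R i) - (\<Sum>i<N. (norm (X (t (Suc i))))\<^sup>2 - (norm (X (t i)))\<^sup>2)"
    by (simp add: sum_subtractf)
  also have "(\<Sum>i<N. (norm (X (t (Suc i))))\<^sup>2 - (norm (X (t i)))\<^sup>2) = (norm (X (t N)))\<^sup>2 - (norm (X (t 0)))\<^sup>2"
    by (rule sum_lessThan_telescope)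
  finally show ?thesis unfolding Xseminorm_sq_def R_def[symmetric] using t0 tN by simp
qed

end
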